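(* Let $\bar d$ be the distance for which the approximation cost is equal to the retrieval cost, i.e.,~$\bar d=\inf \{d: h(d)=C_r\}$. Let $\mathcal B_{\bar d}(x)$ be a ball of radius $\bar d$ centered in $x$. Any cache state $\mathcal S=\{y_1, \dots y_k\}$, such that the balls $\mathcal B_{\bar d}(y_h)$ are contained in $\mathcal X$ and have intersections with null volume, is optimal.
   Context: $\mathcal X$ is a bounded subset of $\mathbb R^p$, the cache holds $k$ objects, $C_a(x,y)=h(\|x-y\|)$ with $h$ non-decreasing and non-negative, $C_r>0$ is the retrieval cost, and $C(x,\mathcal S)=\min(\inf_{y\in\mathcal S}C_a(x,y),C_r)$. Requests have constant spatial density $\lambda$ over $\mathcal X$; the expected cost of state $\mathcal S$ is $\bar C(\mathcal S)=\int_{\mathcal X}\lambda C(x,\mathcal S)\,dx$. A state is optimal if it minimizes $\bar C(\mathcal S)$. For any state, $\bar C(\mathcal S)\ge\lambda kF(|\mathcal X|/k)$ where $F(v)=\int_{\mathcal B(y,v)}\min(C_a(x,y),C_r)\,dx$ and $\mathcal B(y,v)$ is the ball of volume $v$ centered in $y$; the corollary identifies states achieving this bound. *)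

theory Defs
  imports "HOL-Analysis.Analysis"
begin

text \<open>Cost of serving request x from cache state S (C(x,S) = min(inf_y h(|x-y|), C_r)).
  The infimum is taken in ereal so that the empty state gives cost C_r.\<close>
definition req_cost :: "(real \<Rightarrow> real) \<Rightarrow> real \<Rightarrow> 'a::euclidean_space set \<Rightarrow> 'a \<Rightarrow> real" where
  "req_cost h Cr S x = real_of_ereal (min (INF y\<in>S. ereal (h (dist x y))) (ereal Cr))"

definition exp_cost :: "(real \<Rightarrow> real) \<Rightarrow> real \<Rightarrow> real \<Rightarrow> 'a::euclidean_space set \<Rightarrow> 'a set \<Rightarrow> real" where
  "exp_cost h Cr lam X S = (LINT x:X|lebesgue. lam * req_cost h Cr S x)"

definition cache_state :: "'a set \<Rightarrow> nat \<Rightarrow> 'a set \<Rightarrow> bool" where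
  "cache_state X k S \<longleftrightarrow> finite S \<and> card S = k \<and> S \<subseteq> X"

definition optimal_state :: "(real \<Rightarrow> real) \<Rightarrow> real \<Rightarrow> real \<Rightarrow> 'a::euclidean_space set \<Rightarrow> nat \<Rightarrow> 'a set \<Rightarrow> bool" where
  "optimal_state h Cr lam X k S \<longleftrightarrow> cache_state X k S \<and>
     (\<forall>S'. cache_state X k S' \<longrightarrow> exp_cost h Cr lam X S \<le> exp_cost h Cr lam X S')"

text \<open>dbar = inf {d : h(d) = C_r}, in the extended reals (inf of the empty set is +infinity).\<close>
definition dbar :: "(real \<Rightarrow> real) \<Rightarrow> real \<Rightarrow> ereal" where
  "dbar h Cr = Inf {ereal d | d. 0 \<le> d \<and> h d = Cr}"

text \<open>Ball with extended-real radius (radius +infinity gives the whole space).\<close>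
definition ball_ext :: "'a::metric_space \<Rightarrow> ereal \<Rightarrow> 'a set" where
  "ball_ext y r = {x. ereal (dist y x) < r}"

end

theory Submission
  imports Defs
begin

lemma req_cost_char:
  fixes S :: "'a::euclidean_space set"
  assumes "finite S" "S \<noteq> {}"
  shows "\<exists>y0\<in>S. req_cost h Cr S x = min (h (dist x y0)) Cr \<and>
           (\<forall>y\<in>S. req_cost h Cr S x \<le> min (h (dist x y)) Cr)"
proof -
  let ?A = "(\<lambda>y. h (dist x y)) ` S"
  have fin: "finite ?A" "?A \<noteq> {}" using assms by auto
  obtain y0 where y0: "y0 \<in> S" "Min ?A = h (dist x y0)"
    using Min_in[OF fin] by auto
  have le: "\<And>y. y \<in> S \<Longrightarrow> h (dist x y0) \<le> h (dist x y)"
    using Min_le[OF fin(1)] y0 by (metis imageI)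
  have "(INF y\<in>S. ereal (h (dist x y))) = ereal (h (dist x y0))"
  proof (rule antisym)
    show "(INF y\<in>S. ereal (h (dist x y))) \<le> ereal (h (dist x y0))"
      using y0(1) by (rule INF_lower)
    show "ereal (h (dist x y0)) \<le> (INF y\<in>S. ereal (h (dist x y)))"
      using le by (auto intro!: INF_greatest)
  qed
  then have eq: "req_cost h Cr S x = min (h (dist x y0)) Cr"
    unfolding req_cost_def by (simp add: min_def)
  have "\<forall>y\<in>S. req_cost h Cr S x \<le> min (h (dist x y)) Cr"
    using eq le by (simp add: min.coboundedI1 min.mono)
  then show ?thesis using y0(1) eq by blast
qed


theorem corollary1:
  fixes X :: "'a::euclidean_space set" and k :: nat and h :: "real \<Rightarrow> real"
    and Cr lam :: real and S :: "'a set"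
  assumes "bounded X" and "X \<in> sets lebesgue"
    and "mono_on {0..} h" and "\<And>d. 0 \<le> d \<Longrightarrow> 0 \<le> h d"
    and "Cr > 0" and "lam > 0"
    and "cache_state X k S"
    and "\<And>y. y \<in> S \<Longrightarrow> ball_ext y (dbar h Cr) \<subseteq> X"
    and "\<And>y y'. y \<in> S \<Longrightarrow> y' \<in> S \<Longrightarrow> y \<noteq> y' \<Longrightarrow>
           emeasure lebesgue (ball_ext y (dbar h Cr) \<inter> ball_ext y' (dbar h Cr)) = 0"
  shows "optimal_state h Cr lam X k S"
proof (cases "S = {}")
  case True
  then have k0: "k = 0" using assms(7) by (auto simp: cache_state_def)
  show ?thesis unfolding optimal_state_def
  proof (intro conjI allI impI)
    show "cache_state X k S" by fact
    fix S' assume "cache_state X k S'"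
    then have "S' = {}" using k0 by (auto simp: cache_state_def)
    then show "exp_cost h Cr lam X S \<le> exp_cost h Cr lam X S'" using True by simp
  qed
next
  case False
  then obtain y0 where y0: "y0 \<in> S" by blast
  define D where "D = dbar h Cr"
  have "D \<noteq> \<infinity>"
  proof
    assume "D = \<infinity>"
    then have "ball_ext y0 D = UNIV" by (auto simp: ball_ext_def)
    then have "bounded (UNIV :: 'a set)"
      using assms(1) assms(8)[OF y0] D_def bounded_subset by metis
    then show False by simp
  qed
  moreover have "0 \<le> D" unfolding D_def dbar_def by (auto intro!: Inf_greatest)
  ultimately obtain r where r: "D = ereal r" "0 \<le> r" by (cases D) auto
  have ballD: "\<And>y. ball_ext y D = ball y r" using r by (auto simp: ball_ext_def)
  have ballD': "\<And>y. ball_ext y (dbar h Cr) = ball y r" using ballD unfolding D_def .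
  define h' where "h' = (\<lambda>d. h (max d 0))"
  have monoh': "mono h'" unfolding h'_def mono_def
    by (auto intro!: mono_onD[OF assms(3)])
  have [measurable]: "h' \<in> borel_measurable borel" by (rule borel_measurable_mono[OF monoh'])
  have hh: "\<And>x y. h (dist x y) = h' (norm (x - y))" by (simp add: h'_def dist_norm)
  have P1: "\<And>d. r < d \<Longrightarrow> Cr \<le> h' d"
  proof -
    fix d assume "r < d"
    then have "Inf {ereal d | d. 0 \<le> d \<and> h d = Cr} < ereal d" using r D_def dbar_def by simp
    then obtain d' where "0 \<le> d'" "h d' = Cr" "d' < d" by (auto simp: Inf_less_iff)
    then show "Cr \<le> h' d" unfolding h'_def using mono_onD[OF assms(3), of d' "max d 0"] by auto
  qed
  define \<phi> where "\<phi> = (\<lambda>z::'a. Cr - min (h' (norm z)) Cr)"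
  have [measurable]: "\<phi> \<in> borel_measurable borel" unfolding \<phi>_def by measurable
  have phi0: "\<And>z. 0 \<le> \<phi> z" and phiC: "\<And>z. \<phi> z \<le> Cr"
    unfolding \<phi>_def h'_def using assms(4,5) by auto
  have phiz: "\<And>z. r < norm z \<Longrightarrow> \<phi> z = 0" unfolding \<phi>_def using P1 by (metis antisym diff_self min.absorb2 min_def)
  have rc: "\<exists>y0\<in>T. req_cost h Cr T x = Cr - \<phi> (x - y0) \<and>
           (\<forall>y\<in>T. req_cost h Cr T x \<le> Cr - \<phi> (x - y))" if "finite T" "T \<noteq> {}" for T :: "'a set" and x
    using req_cost_char[OF that, where h=h and x=x and Cr=Cr] by (simp add: hh \<phi>_def)
  have rc_lb: "Cr - (\<Sum>y\<in>T. \<phi> (x - y)) \<le> req_cost h Cr T x" if Tne: "finite T" "T \<noteq> {}" for T :: "'a set" and x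
  proof -
    obtain y1 where y1: "y1 \<in> T" "req_cost h Cr T x = Cr - \<phi> (x - y1)" using rc[OF Tne] by blast
    have "\<phi> (x - y1) \<le> (\<Sum>y\<in>T. \<phi> (x - y))"
      using member_le_sum[of y1 T "\<lambda>y. \<phi> (x - y)"] y1(1) Tne(1) phi0 by auto
    then show ?thesis using y1 by linarith
  qed
  have rc_eq: "req_cost h Cr T x = Cr - (\<Sum>y\<in>T. \<phi> (x - y))"
    if "finite T" "y1 \<in> T" "\<forall>y\<in>T. y \<noteq> y1 \<longrightarrow> \<phi> (x - y) = 0" for T :: "'a set" and x y1
  proof -
    have ne: "T \<noteq> {}" using that by auto
    have "(\<Sum>y\<in>T. \<phi> (x - y)) = \<phi> (x - y1) + (\<Sum>y\<in>T - {y1}. \<phi> (x - y))"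
      using that by (simp add: sum.remove)
    also have "(\<Sum>y\<in>T - {y1}. \<phi> (x - y)) = 0" using that(3) by (auto intro!: sum.neutral)
    finally have "(\<Sum>y\<in>T. \<phi> (x - y)) = \<phi> (x - y1)" by simp
    then show ?thesis using rc[OF that(1) ne, of x] rc_lb[OF that(1) ne, of x] that(2) by force
  qed
  have rc_meas: "(\<lambda>x. req_cost h Cr T x) \<in> borel_measurable lebesgue" if Tne: "finite T" "T \<noteq> {}" for T :: "'a set"
  proof -
    have "(\<lambda>x. req_cost h Cr T x) = (\<lambda>x. Min ((\<lambda>y. Cr - \<phi> (x - y)) ` T))"
    proof
      fix x
      obtain y1 where y1: "y1 \<in> T" "req_cost h Cr T x = Cr - \<phi> (x - y1)"
        and le: "\<forall>y\<in>T. req_cost h Cr T x \<le> Cr - \<phi> (x - y)" using rc[OF Tne] by blast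
      show "req_cost h Cr T x = Min ((\<lambda>y. Cr - \<phi> (x - y)) ` T)"
        by (rule Min_eqI[symmetric]) (use Tne y1 le in auto)
    qed
    also have "\<dots> \<in> borel_measurable borel" using Tne(1) by measurable
    then have "(\<lambda>x. Min ((\<lambda>y. Cr - \<phi> (x - y)) ` T)) \<in> borel_measurable lebesgue"
      by (simp add: measurable_completion)
    finally show ?thesis .
  qed
  have Xm: "X \<in> sets lebesgue" "emeasure lebesgue X < \<infinity>"
    using bounded_set_imp_lmeasurable[OF assms(1,2)] by (auto simp: fmeasurable_def)
  have [measurable]: "(\<lambda>x. \<phi> (x - y)) \<in> borel_measurable lebesgue" for y
  proof -
    have "(\<lambda>x. \<phi> (x - y)) \<in> borel_measurable borel" by measurable
    then show ?thesis by (simp add: measurable_completion)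
  qed
  have intX: "integrable lebesgue (\<lambda>x. indicator X x * f x)"
    if "f \<in> borel_measurable lebesgue" "\<And>x. \<bar>f x\<bar> \<le> B" for f :: "'a \<Rightarrow> real" and B :: real
  proof (rule Bochner_Integration.integrable_bound[where f="\<lambda>x. B * indicator X x"])
    show "integrable lebesgue (\<lambda>x. B * indicator X x)"
      using Xm by (intro integrable_mult_right integrable_real_indicator) auto
    show "(\<lambda>x. indicator X x * f x) \<in> borel_measurable lebesgue" using that Xm by measurable
    show "AE x in lebesgue. norm (indicator X x * f x) \<le> norm (B * indicator X x)"
    proof (intro AE_I2)
      fix x
      have "\<bar>f x\<bar> \<le> \<bar>B\<bar>" using that(2)[of x] by linarith
      then show "norm (indicator X x * f x) \<le> norm (B * indicator X x)"
        by (simp add: indicator_def)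
    qed
  qed
  have intphi: "integrable lebesgue (\<lambda>x. \<phi> (x - y))" for y
  proof (rule Bochner_Integration.integrable_bound[where f="\<lambda>x. Cr * indicator (cball y r) x"])
    show "integrable lebesgue (\<lambda>x. Cr * indicator (cball y r) x)"
      using lmeasurable_cball[of y r] by (intro integrable_mult_right integrable_real_indicator) (auto simp: fmeasurable_def)
    show "(\<lambda>x. \<phi> (x - y)) \<in> borel_measurable lebesgue" by measurable
    show "AE x in lebesgue. norm (\<phi> (x - y)) \<le> norm (Cr * indicator (cball y r) x)"
    proof (intro AE_I2)
      fix x
      show "norm (\<phi> (x - y)) \<le> norm (Cr * indicator (cball y r) x)"
      proof (cases "x \<in> cball y r")
        case True then show ?thesis using phi0[of "x - y"] phiC[of "x - y"] assms(5) by simp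
      next
        case False then have "r < norm (x - y)" by (simp add: dist_norm norm_minus_commute)
        then show ?thesis using phiz by simp
      qed
    qed
  qed
  define \<Phi> where "\<Phi> = integral\<^sup>L lebesgue \<phi>"
  have transl: "integral\<^sup>L lebesgue (\<lambda>x. \<phi> (x - y)) = \<Phi>" for y
  proof -
    have "integral\<^sup>L lebesgue (\<lambda>x. \<phi> (x - y)) = integral\<^sup>L lborel (\<lambda>x. \<phi> (x - y))"
      by (rule integral_completion) measurable
    also have "\<dots> = integral\<^sup>L lborel (\<lambda>x. \<phi> (-y + x))" by simp
    also have "\<dots> = integral\<^sup>L (distr lborel borel ((+) (-y))) \<phi>"
      by (rule integral_distr[symmetric]) measurable
    also have "\<dots> = integral\<^sup>L lborel \<phi>" by (simp only: lborel_distr_plus)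
    also have "\<dots> = \<Phi>" unfolding \<Phi>_def by (rule integral_completion[symmetric]) measurable
    finally show ?thesis .
  qed
  have expc: "exp_cost h Cr lam X T = integral\<^sup>L lebesgue (\<lambda>x. indicator X x * (lam * req_cost h Cr T x))" for T :: "'a set"
    unfolding exp_cost_def set_lebesgue_integral_def by (simp only: real_scaleR_def)
  have sumbd: "\<bar>Cr - (\<Sum>y\<in>T. \<phi> (x - y))\<bar> \<le> Cr * (1 + real (card T))" for T :: "'a set" and x
  proof -
    have "(\<Sum>y\<in>T. \<phi> (x - y)) \<le> of_nat (card T) * Cr"
      using sum_bounded_above[of T "\<lambda>y. \<phi> (x - y)" Cr] phiC by auto
    moreover have "0 \<le> (\<Sum>y\<in>T. \<phi> (x - y))" using phi0 by (simp add: sum_nonneg)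
    ultimately show ?thesis using assms(5) by (simp add: abs_le_iff algebra_simps)
  qed
  have expand: "integral\<^sup>L lebesgue (\<lambda>x. indicator X x * (lam * (Cr - (\<Sum>y\<in>T. \<phi> (x - y))))) =
      lam * Cr * measure lebesgue X - lam * (\<Sum>y\<in>T. integral\<^sup>L lebesgue (\<lambda>x. indicator X x * \<phi> (x - y)))"
    for T :: "'a set"
  proof -
    have ii: "integrable lebesgue (\<lambda>x. indicator X x * \<phi> (x - y))" for y
      by (rule intX[of _ Cr]) (use phi0 phiC in \<open>auto simp: abs_le_iff intro: order_trans[OF _ phi0]\<close>)
    have "(\<lambda>x. indicator X x * (lam * (Cr - (\<Sum>y\<in>T. \<phi> (x - y))))) =
        (\<lambda>x. lam * Cr * indicator X x - (\<Sum>y\<in>T. lam * (indicator X x * \<phi> (x - y))))"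
      by (auto simp: algebra_simps sum_distrib_left)
    moreover have "integral\<^sup>L lebesgue (\<lambda>x. lam * Cr * indicator X x - (\<Sum>y\<in>T. lam * (indicator X x * \<phi> (x - y))))
       = integral\<^sup>L lebesgue (\<lambda>x. lam * Cr * indicator X x) - integral\<^sup>L lebesgue (\<lambda>x. \<Sum>y\<in>T. lam * (indicator X x * \<phi> (x - y)))"
    proof (rule Bochner_Integration.integral_diff)
      show "integrable lebesgue (\<lambda>x. lam * Cr * indicator X x)"
        using Xm by (intro integrable_mult_right integrable_real_indicator) auto
      show "integrable lebesgue (\<lambda>x. \<Sum>y\<in>T. lam * (indicator X x * \<phi> (x - y)))"
        using ii by (intro Bochner_Integration.integrable_sum integrable_mult_right) auto
    qed
    moreover have "integral\<^sup>L lebesgue (\<lambda>x. \<Sum>y\<in>T. lam * (indicator X x * \<phi> (x - y))) =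
        (\<Sum>y\<in>T. lam * integral\<^sup>L lebesgue (\<lambda>x. indicator X x * \<phi> (x - y)))"
      using ii by (subst Bochner_Integration.integral_sum) (auto intro: integrable_mult_right)
    ultimately show ?thesis by (simp add: sum_distrib_left)
  qed
  have ind_le: "integral\<^sup>L lebesgue (\<lambda>x. indicator X x * \<phi> (x - y)) \<le> \<Phi>" for y
  proof -
    have "integral\<^sup>L lebesgue (\<lambda>x. indicator X x * \<phi> (x - y)) \<le> integral\<^sup>L lebesgue (\<lambda>x. \<phi> (x - y))"
    proof (rule integral_mono)
      show "integrable lebesgue (\<lambda>x. indicator X x * \<phi> (x - y))"
        by (rule intX[of _ Cr]) (use phi0 phiC in \<open>auto simp: abs_le_iff intro: order_trans[OF _ phi0]\<close>)
      show "integrable lebesgue (\<lambda>x. \<phi> (x - y))" by (rule intphi)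
      show "indicator X x * \<phi> (x - y) \<le> \<phi> (x - y)" for x using phi0[of "x - y"] by (simp add: indicator_def)
    qed
    then show ?thesis using transl by simp
  qed
  have sph: "AE x in lebesgue. x \<notin> sphere y r" for y
    by (rule AE_not_in) (simp add: negligible_iff_null_sets[symmetric] negligible_sphere)
  have ind_eq: "integral\<^sup>L lebesgue (\<lambda>x. indicator X x * \<phi> (x - y)) = \<Phi>" if "y \<in> S" for y
  proof -
    have "integral\<^sup>L lebesgue (\<lambda>x. indicator X x * \<phi> (x - y)) = integral\<^sup>L lebesgue (\<lambda>x. \<phi> (x - y))"
    proof (rule integral_cong_AE)
      show "(\<lambda>x. indicator X x * \<phi> (x - y)) \<in> borel_measurable lebesgue" using Xm by measurable
      show "(\<lambda>x. \<phi> (x - y)) \<in> borel_measurable lebesgue" by measurable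
      show "AE x in lebesgue. indicator X x * \<phi> (x - y) = \<phi> (x - y)"
        using sph[of y]
      proof (rule AE_mp, intro AE_I2 impI)
        fix x assume x: "x \<notin> sphere y r"
        show "indicator X x * \<phi> (x - y) = \<phi> (x - y)"
        proof (cases "x \<in> ball y r")
          case True then have "x \<in> X" using assms(8)[OF that, unfolded ballD'] by auto
          then show ?thesis by simp
        next
          case False then have "r < norm (x - y)" using x by (simp add: dist_norm norm_minus_commute)
          then show ?thesis using phiz by simp
        qed
      qed
    qed
    then show ?thesis using transl by simp
  qed
  have finS: "finite S" and cardS: "card S = k" using assms(7) by (auto simp: cache_state_def)
  have rcbd: "\<bar>lam * req_cost h Cr T x\<bar> \<le> lam * Cr" if Tne: "finite T" "T \<noteq> {}" for T :: "'a set" and x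
  proof -
    obtain y1 where "req_cost h Cr T x = Cr - \<phi> (x - y1)" using rc[OF Tne] by blast
    then show ?thesis using phi0[of "x - y1"] phiC[of "x - y1"] assms(6) by (simp add: abs_mult)
  qed
  have lbd: "\<bar>lam * (Cr - (\<Sum>y\<in>T. \<phi> (x - y)))\<bar> \<le> lam * (Cr * (1 + real (card T)))" for T :: "'a set" and x
    using sumbd[of x T] assms(6) by (simp add: abs_mult)
  have meas_sum: "(\<lambda>x. lam * (Cr - (\<Sum>y\<in>T. \<phi> (x - y)))) \<in> borel_measurable lebesgue" if "finite T" for T :: "'a set"
    using that by measurable
  have costS: "exp_cost h Cr lam X S = lam * Cr * measure lebesgue X - lam * (real k * \<Phi>)"
  proof -
    have "exp_cost h Cr lam X S =
        integral\<^sup>L lebesgue (\<lambda>x. indicator X x * (lam * (Cr - (\<Sum>y\<in>S. \<phi> (x - y)))))"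
      unfolding expc
    proof (rule integral_cong_AE)
      show "(\<lambda>x. indicator X x * (lam * req_cost h Cr S x)) \<in> borel_measurable lebesgue"
        using Xm rc_meas[OF finS False] by measurable
      show "(\<lambda>x. indicator X x * (lam * (Cr - (\<Sum>y\<in>S. \<phi> (x - y))))) \<in> borel_measurable lebesgue"
        using Xm meas_sum[OF finS] by measurable
      have A1: "AE x in lebesgue. \<forall>y\<in>S. x \<notin> sphere y r"
        using finS sph by (intro AE_finite_allI) auto
      have A2: "AE x in lebesgue. \<forall>p\<in>S \<times> S. fst p \<noteq> snd p \<longrightarrow> x \<notin> ball (fst p) r \<inter> ball (snd p) r"
      proof (intro AE_finite_allI)
        show "finite (S \<times> S)" using finS by simp
        fix p assume p: "p \<in> S \<times> S"
        show "AE x in lebesgue. fst p \<noteq> snd p \<longrightarrow> x \<notin> ball (fst p) r \<inter> ball (snd p) r"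
        proof (cases "fst p = snd p")
          case True then show ?thesis by simp
        next
          case False
          have "emeasure lebesgue (ball (fst p) r \<inter> ball (snd p) r) = 0"
            using assms(9)[of "fst p" "snd p", unfolded ballD'] p False by (auto simp del: emeasure_completion)
          moreover have "ball (fst p) r \<inter> ball (snd p) r \<in> sets lebesgue"
            by (intro sets.Int) (auto intro: fmeasurableD)
          ultimately have "ball (fst p) r \<inter> ball (snd p) r \<in> null_sets lebesgue"
            by (simp add: null_sets_def)
          then show ?thesis using AE_not_in by force
        qed
      qed
      show "AE x in lebesgue. indicator X x * (lam * req_cost h Cr S x) =
          indicator X x * (lam * (Cr - (\<Sum>y\<in>S. \<phi> (x - y))))"
        using AE_conj_iff[THEN iffD2, OF conjI[OF A1 A2]]
      proof (rule AE_mp, intro AE_I2 impI)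
        fix x
        assume xx: "(\<forall>y\<in>S. x \<notin> sphere y r) \<and> (\<forall>p\<in>S \<times> S. fst p \<noteq> snd p \<longrightarrow> x \<notin> ball (fst p) r \<inter> ball (snd p) r)"
        then have x1: "\<forall>y\<in>S. x \<notin> sphere y r"
          and x2: "\<forall>p\<in>S \<times> S. fst p \<noteq> snd p \<longrightarrow> x \<notin> ball (fst p) r \<inter> ball (snd p) r" by auto
        obtain y1 where y1: "y1 \<in> S" "\<forall>y\<in>S. y \<noteq> y1 \<longrightarrow> x \<notin> ball y r"
        proof (cases "\<exists>y1\<in>S. x \<in> ball y1 r")
          case True
          then obtain y1 where "y1 \<in> S" "x \<in> ball y1 r" by blast
          then show ?thesis using x2 that[of y1] by force
        next
          case False then show ?thesis using that[of y0] y0 by blast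
        qed
        have "\<forall>y\<in>S. y \<noteq> y1 \<longrightarrow> \<phi> (x - y) = 0"
        proof (intro ballI impI)
          fix y assume "y \<in> S" "y \<noteq> y1"
          then have "x \<notin> ball y r" "x \<notin> sphere y r" using y1 x1 by auto
          then have "r < norm (x - y)" by (simp add: dist_norm norm_minus_commute)
          then show "\<phi> (x - y) = 0" using phiz by simp
        qed
        then show "indicator X x * (lam * req_cost h Cr S x) =
          indicator X x * (lam * (Cr - (\<Sum>y\<in>S. \<phi> (x - y))))"
          using rc_eq[OF finS y1(1)] by simp
      qed
    qed
    also have "\<dots> = lam * Cr * measure lebesgue X - lam * (\<Sum>y\<in>S. \<Phi>)"
      using expand[of S] ind_eq by simp
    finally show ?thesis using cardS by simp
  qed
  show ?thesis unfolding optimal_state_def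
  proof (intro conjI allI impI)
    show "cache_state X k S" by fact
    fix S' assume cs: "cache_state X k S'"
    have finS': "finite S'" and cardS': "card S' = k" using cs by (auto simp: cache_state_def)
    have ne: "S' \<noteq> {}" using cardS' cardS finS False by auto
    have "exp_cost h Cr lam X S = lam * Cr * measure lebesgue X - lam * (\<Sum>y\<in>S'. \<Phi>)"
      using costS cardS' by simp
    also have "\<dots> \<le> lam * Cr * measure lebesgue X -
        lam * (\<Sum>y\<in>S'. integral\<^sup>L lebesgue (\<lambda>x. indicator X x * \<phi> (x - y)))"
      using ind_le assms(6) by (intro diff_left_mono mult_left_mono sum_mono) auto
    also have "\<dots> = integral\<^sup>L lebesgue (\<lambda>x. indicator X x * (lam * (Cr - (\<Sum>y\<in>S'. \<phi> (x - y)))))"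
      using expand[of S'] by simp
    also have "\<dots> \<le> exp_cost h Cr lam X S'"
      unfolding expc
    proof (rule integral_mono)
      show "integrable lebesgue (\<lambda>x. indicator X x * (lam * (Cr - (\<Sum>y\<in>S'. \<phi> (x - y)))))"
        by (rule intX[OF meas_sum[OF finS'] lbd])
      show "integrable lebesgue (\<lambda>x. indicator X x * (lam * req_cost h Cr S' x))"
        by (rule intX[OF _ rcbd[OF finS' ne]]) (use rc_meas[OF finS' ne] in measurable)
      show "indicator X x * (lam * (Cr - (\<Sum>y\<in>S'. \<phi> (x - y)))) \<le> indicator X x * (lam * req_cost h Cr S' x)" for x
        using rc_lb[OF finS' ne, of x] assms(6) by (simp add: indicator_def)
    qed
    finally show "exp_cost h Cr lam X S \<le> exp_cost h Cr lam X S'" .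
  qed
qed

end
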